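(* Let $n\ge 2$ and let $(G(k))_{k\in\mathbb{N}}$ be a sequence of digraphs on $\mathcal{V}=\{1,\dots,n\}$ with knowledge sets evolving by the flooding update described in the context. Fix a node $w\in\mathcal{V}$. Suppose that for every $k\in\{0,1,\dots,n-2\}$ there exists an output-cord $\mathcal{O}^w(k)$ from node $w$ at time $k$ with $|\mathcal{O}^w(k)|\ge k+1$. Then for every $k\in\{0,1,\dots,n-2\}$, $|\{i\in\mathcal{V} : d_w\in\mathcal{K}_i(k+1)\}|\ge k+2$.
   Context: Network: $\mathcal{V}=\{1,\dots,n\}$; node $i$ holds initial data $d_i\in\mathbb{R}$, pairwise distinct. At discrete times $k\in\mathbb{N}$ communication follows digraph $G(k)=(\mathcal{V},\mathcal{E}(k))$; node $i$ sends to $j$ at time $k$ iff $(i,j)\in\mathcal{E}(k)$. Knowledge sets: $\mathcal{K}_i(0)=\{d_i\}$ and $\mathcal{K}_j(k+1)=\mathcal{K}_j(k)\cup\bigcup_{i:(i,j)\in\mathcal{E}(k)}\mathcal{K}_i(k)$. Output-cord: an output-cord from node $i$ at time $k$ is an ordered list $\mathcal{O}^i(k)=(\mathcal{O}^i_1,\dots,\mathcal{O}^i_m)$ of pairwise distinct nodes of $\mathcal{V}\setminus\{i\}$ such that $(\mathcal{O}^i_{j+1},\mathcal{O}^i_j)\in\mathcal{E}(k)$ for all $j\in\{1,\dots,m-1\}$ and $(i,\mathcal{O}^i_m)\in\mathcal{E}(k)$; its cardinality is $|\mathcal{O}^i(k)|=m$. *)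

theory Defs
  imports Main "HOL.Real"
begin

fun knowledge :: "(nat \<Rightarrow> (nat \<times> nat) set) \<Rightarrow> (nat \<Rightarrow> real) \<Rightarrow> nat \<Rightarrow> nat \<Rightarrow> real set" where
  "knowledge E d 0 j = {d j}"
| "knowledge E d (Suc k) j = knowledge E d k j \<union> (\<Union>i\<in>{i. (i, j) \<in> E k}. knowledge E d k i)"

definition output_cord :: "nat set \<Rightarrow> (nat \<Rightarrow> (nat \<times> nat) set) \<Rightarrow> nat \<Rightarrow> nat \<Rightarrow> nat list \<Rightarrow> bool" where
  "output_cord V E w k cs \<longleftrightarrow>
     cs \<noteq> [] \<and> distinct cs \<and> set cs \<subseteq> V - {w} \<and>
     (\<forall>j. Suc j < length cs \<longrightarrow> (cs ! Suc j, cs ! j) \<in> E k) \<and>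
     (w, last cs) \<in> E k"

end

theory Submission
  imports Defs
begin

lemma know_mono: "knowledge E d k i \<subseteq> knowledge E d (Suc k) i"
  by simp

lemma know_self: "d w \<in> knowledge E d k w"
  by (induction k) auto

lemma chain_exit:
  assumes cord: "output_cord V E w k cs"
  shows "\<forall>j. j < length cs \<longrightarrow> cs ! j \<notin> {i\<in>V. d w \<in> knowledge E d k i} \<longrightarrow>
     (\<exists>x\<in>set cs. x \<notin> {i\<in>V. d w \<in> knowledge E d k i} \<and> x \<in> {i\<in>V. d w \<in> knowledge E d (Suc k) i})"
proof -
  let ?S = "{i\<in>V. d w \<in> knowledge E d k i}"
  let ?T = "{i\<in>V. d w \<in> knowledge E d (Suc k) i}"
  have ne: "cs \<noteq> []" and sub: "set cs \<subseteq> V - {w}"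
    and ed: "\<And>j. Suc j < length cs \<Longrightarrow> (cs ! Suc j, cs ! j) \<in> E k"
    and wl: "(w, last cs) \<in> E k" using cord unfolding output_cord_def by auto
  have "\<forall>j. length cs - 1 - j = m \<longrightarrow> j < length cs \<longrightarrow> cs ! j \<notin> ?S \<longrightarrow> (\<exists>x\<in>set cs. x \<notin> ?S \<and> x \<in> ?T)" for m
  proof (induction m)
    case 0
    show ?case
    proof (intro allI impI)
      fix j assume a: "length cs - 1 - j = 0" "j < length cs" "cs ! j \<notin> ?S"
      have jl: "j = length cs - 1" using a by auto
      hence "cs ! j = last cs" using ne by (simp add: last_conv_nth)
      moreover have "cs ! j \<in> V" using a(2) sub nth_mem by blast
      ultimately have "cs ! j \<in> ?T" using wl know_self[of d w E k] by auto
      thus "\<exists>x\<in>set cs. x \<notin> ?S \<and> x \<in> ?T" using a nth_mem by blast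
    qed
  next
    case (Suc m)
    show ?case
    proof (intro allI impI)
      fix j assume a: "length cs - 1 - j = Suc m" "j < length cs" "cs ! j \<notin> ?S"
      have j1: "Suc j < length cs" using a by auto
      show "\<exists>x\<in>set cs. x \<notin> ?S \<and> x \<in> ?T"
      proof (cases "cs ! Suc j \<in> ?S")
        case True
        have "cs ! j \<in> V" using a(2) sub nth_mem by blast
        hence "cs ! j \<in> ?T" using True ed[OF j1] by auto
        thus ?thesis using a nth_mem by blast
      next
        case False
        have "length cs - 1 - Suc j = m" using a by auto
        thus ?thesis using Suc.IH j1 False by blast
      qed
    qed
  qed
  thus ?thesis by blast
qed

lemma step:
  assumes cord: "output_cord V E w k cs" and fin: "finite V" and wV: "w \<in> V"
    and len: "length cs \<ge> k + 1"
    and c: "card {i\<in>V. d w \<in> knowledge E d k i} \<ge> k + 1"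
  shows "card {i\<in>V. d w \<in> knowledge E d (Suc k) i} \<ge> k + 2"
proof -
  let ?S = "{i\<in>V. d w \<in> knowledge E d k i}"
  let ?T = "{i\<in>V. d w \<in> knowledge E d (Suc k) i}"
  have ST: "?S \<subseteq> ?T" by auto
  have finT: "finite ?T" using fin by auto
  have dist: "distinct cs" and sub: "set cs \<subseteq> V - {w}" using cord unfolding output_cord_def by auto
  show ?thesis
  proof (cases "set cs \<subseteq> ?S")
    case True
    have "insert w (set cs) \<subseteq> ?T" using True ST wV know_self[of d w E "Suc k"] by auto
    hence "card (insert w (set cs)) \<le> card ?T" using finT card_mono by blast
    moreover have "card (insert w (set cs)) = length cs + 1"
    proof -
      have "w \<notin> set cs" using sub by auto
      thus ?thesis using dist by (simp add: distinct_card)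
    qed
    ultimately show ?thesis using len by linarith
  next
    case False
    then obtain j where "j < length cs" "cs ! j \<notin> ?S" by (metis in_set_conv_nth subsetI)
    then obtain x where x: "x \<notin> ?S" "x \<in> ?T" using chain_exit[OF cord] by blast
    have "insert x ?S \<subseteq> ?T" using x ST by auto
    hence "card (insert x ?S) \<le> card ?T" using finT card_mono by blast
    moreover have "card (insert x ?S) = card ?S + 1" using x fin by simp
    ultimately show ?thesis using c by linarith
  qed
qed

theorem lemma2:
  fixes n :: nat and E :: "nat \<Rightarrow> (nat \<times> nat) set" and d :: "nat \<Rightarrow> real" and w :: nat
  assumes "n \<ge> 2"
    and "\<And>k. E k \<subseteq> {1..n} \<times> {1..n}"
    and "inj_on d {1..n}"
    and "w \<in> {1..n}"
    and "\<And>k. k \<le> n - 2 \<Longrightarrow> \<exists>cs. output_cord {1..n} E w k cs \<and> length cs \<ge> k + 1"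
  shows "\<forall>k \<le> n - 2. card {i \<in> {1..n}. d w \<in> knowledge E d (k + 1) i} \<ge> k + 2"
proof (intro allI impI)
  fix k assume "k \<le> n - 2"
  thus "card {i \<in> {1..n}. d w \<in> knowledge E d (k + 1) i} \<ge> k + 2"
  proof (induction k)
    case 0
    obtain cs where cs: "output_cord {1..n} E w 0 cs" "length cs \<ge> 0 + 1" using assms(5)[of 0] by auto
    have "{w} \<subseteq> {i \<in> {1..n}. d w \<in> knowledge E d 0 i}" using assms(4) know_self[of d w E 0] by auto
    hence "card {i \<in> {1..n}. d w \<in> knowledge E d 0 i} \<ge> 0 + 1"
      by (metis (no_types, lifting) card_mono finite_atLeastAtMost finite_subset mem_Collect_eq subsetI card_1_singleton_iff Suc_eq_plus1 add_0 card.empty card_insert_disjoint empty_iff finite.emptyI)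
    from step[OF cs(1) _ assms(4) cs(2) this] show ?case by simp
  next
    case (Suc k)
    obtain cs where cs: "output_cord {1..n} E w (Suc k) cs" "length cs \<ge> Suc k + 1" using assms(5) Suc.prems by blast
    have "card {i \<in> {1..n}. d w \<in> knowledge E d (Suc k) i} \<ge> Suc k + 1" using Suc by simp
    from step[OF cs(1) _ assms(4) cs(2) this] show ?case by simp
  qed
qed

end
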